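(* Let $n\geq 3$ and $m\geq 1$. The matching $\mu$ on the face poset of $\Delta_m^{n,2}$ has no critical cells of dimension $4$ or more.
   Context: $\Delta_m^{n,2}=\mathrm{VR}(\{0,\ldots,m\}^n;2)$, where $\{0,\ldots,m\}^n$ carries the Manhattan metric $d(x,y)=\sum_i|x_i-y_i|$ and $\mathrm{VR}(X;r)$ is the complex of finite subsets of diameter $\leq r$. Order the vertices as $v_1\prec\cdots\prec v_N$ ($N=(m+1)^n$) in the anti-lexicographic order ($x\prec y$ iff at the largest index $i$ with $x_i\neq y_i$, $x_i<y_i$). Let $T_0$ be the set of all simplices of $\Delta_m^{n,2}$, including the empty simplex. For $i=1,\ldots,N$ put $S_i=\{\sigma\in T_{i-1}: v_i\notin\sigma,\ \sigma\cup\{v_i\}\in T_{i-1}\}$, $\mu(\sigma)=\sigma\cup\{v_i\}$ for $\sigma\in S_i$, and $T_i=T_{i-1}\setminus(S_i\cup\{\sigma\cup\{v_i\}:\sigma\in S_i\})$. The critical cells of $\mu$ are the simplices in $T_N$; the dimension of a simplex is its cardinality minus one. *)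

theory Defs
  imports Main
begin

definition grid :: "nat \<Rightarrow> nat \<Rightarrow> nat list set" where
  "grid m n = {x. length x = n \<and> (\<forall>i<n. x ! i \<le> m)}"

definition manhattan :: "nat list \<Rightarrow> nat list \<Rightarrow> nat" where
  "manhattan x y = (\<Sum>i<length x. nat \<bar>int (x ! i) - int (y ! i)\<bar>)"

text \<open>Vietoris--Rips complex VR(X; r): all finite subsets (including the empty one)
  of diameter at most r.\<close>
definition vr_complex :: "nat list set \<Rightarrow> nat \<Rightarrow> nat list set set" where
  "vr_complex X r = {\<sigma>. \<sigma> \<subseteq> X \<and> finite \<sigma> \<and> (\<forall>x\<in>\<sigma>. \<forall>y\<in>\<sigma>. manhattan x y \<le> r)}"

definition antilex_less :: "nat list \<Rightarrow> nat list \<Rightarrow> bool" where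
  "antilex_less x y \<longleftrightarrow>
     (\<exists>i<length x. x ! i < y ! i \<and> (\<forall>j. i < j \<and> j < length x \<longrightarrow> x ! j = y ! j))"

definition match_S :: "'a set set \<Rightarrow> 'a \<Rightarrow> 'a set set" where
  "match_S T v = {\<sigma> \<in> T. v \<notin> \<sigma> \<and> insert v \<sigma> \<in> T}"

definition match_step :: "'a set set \<Rightarrow> 'a \<Rightarrow> 'a set set" where
  "match_step T v = T - (match_S T v \<union> (insert v) ` match_S T v)"

definition critical_cells :: "'a set set \<Rightarrow> 'a list \<Rightarrow> 'a set set" where
  "critical_cells T0 vs = foldl match_step T0 vs"

definition simplex_dim :: "'a set \<Rightarrow> int" where
  "simplex_dim \<sigma> = int (card \<sigma>) - 1"

end

theory Submission
  imports Defs "HOL-Library.Multiset"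
begin

definition mdist :: "'a multiset \<Rightarrow> 'a multiset \<Rightarrow> nat" where
 "mdist A B = size (A - B) + size (B - A)"
lemma d1: "size ({#y#} - M) \<le> 1"
  by (metis diff_subset_eq_self size_mset_mono size_single)
lemma d2: "size ({#y#} - {#z#}) + size ({#z#} - {#y#}) \<le> 2"
  using add_mono[OF d1[of y "{#z#}"] d1[of z "{#y#}"]] by simp
lemma md_add: "mdist (add_mset x A) (add_mset x B) = mdist A B"
  by (simp add: mdist_def)
lemma md2: "mdist {#x,y#} {#z,t#} \<le> 2 \<longleftrightarrow> (x = z \<or> x = t \<or> y = z \<or> y = t)"
proof
  assume "x = z \<or> x = t \<or> y = z \<or> y = t"
  then show "mdist {#x,y#} {#z,t#} \<le> 2"
    using d2 by (auto simp: mdist_def add_mset_commute[of x y] add_mset_commute[of z t])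
next
  assume "mdist {#x,y#} {#z,t#} \<le> 2"
  show "x = z \<or> x = t \<or> y = z \<or> y = t"
  proof (rule ccontr)
    assume n: "\<not> (x = z \<or> x = t \<or> y = z \<or> y = t)"
    then have "{#x,y#} - {#z,t#} = {#x,y#}" "{#z,t#} - {#x,y#} = {#z,t#}" by auto
    then show False using \<open>mdist {#x,y#} {#z,t#} \<le> 2\<close> by (simp add: mdist_def)
  qed
qed
lemma pair_eq: "{#x,y#} = {#z,t#} \<longleftrightarrow> (x = z \<and> y = t) \<or> (x = t \<and> y = z)"
  by (metis (full_types) add_eq_conv_ex add_mset_eq_single)
lemma sz2: "size (C::'a multiset) = 2 \<Longrightarrow> \<exists>x y. C = {#x,y#}"
  by (metis Suc_1 multiset_cases nat.inject nat.simps(3)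
    size_1_singleton_mset size_add_mset size_empty)
lemma sz2a: assumes "size (C::'a multiset) = 2" "a \<in># C" shows "\<exists>y. C = {#a,y#}"
proof -
  have "size (C - {#a#}) = 1" using assms by (simp add: size_Diff_singleton)
  then obtain y where y: "C - {#a#} = {#y#}" using size_1_singleton_mset by blast
  then have "C = {#a,y#}" using assms(2) by (metis insert_DiffM)
  then show ?thesis by blast
qed
lemma sub1: "C \<subseteq># add_mset a M \<Longrightarrow> (a \<in># C \<and> C - {#a#} \<subseteq># M) \<or> C \<subseteq># M"
  by (metis add_mset_add_single diff_single_trivial subset_eq_diff_conv)
lemma La: assumes "C \<subseteq># add_mset a M" "size C = 2" shows "(\<exists>y. C = {#a,y#} \<and> y \<in># M) \<or> C \<subseteq># M"
proof (cases "a \<in># C \<and> C - {#a#} \<subseteq># M")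
  case True
  then have "size (C - {#a#}) = 1" using assms(2) by (simp add: size_Diff_submset)
  then obtain y where y: "C - {#a#} = {#y#}" using size_1_singleton_mset by blast
  then have "C = {#a,y#}" using True by (metis insert_DiffM)
  moreover have "y \<in># M" using True y by (simp add: subset_mset_def)
  ultimately show ?thesis by blast
next
  case False then show ?thesis using sub1[OF assms(1)] by blast
qed
lemma Lb: "C \<subseteq># M \<Longrightarrow> size C = size M \<Longrightarrow> C = M"
  using mset_subset_size subset_mset.less_le_not_le by fastforce
lemma six: assumes "size C = 2" "C \<subseteq># {#a,b,c,d#}" shows "C \<in> {{#a,b#},{#a,c#},{#a,d#},{#b,c#},{#b,d#},{#c,d#}}"
proof -
  from La[OF assms(2,1)] show ?thesis
  proof
    assume "\<exists>y. C = {#a,y#} \<and> y \<in># {#b,c,d#}" then show ?thesis by auto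
  next
    assume "C \<subseteq># {#b,c,d#}"
    from La[OF this assms(1)] show ?thesis
    proof
      assume "\<exists>y. C = {#b,y#} \<and> y \<in># {#c,d#}" then show ?thesis by auto
    next
      assume "C \<subseteq># {#c,d#}"
      then have "C = {#c,d#}" using Lb assms(1) by fastforce
      then show ?thesis by simp
    qed
  qed
qed

lemma Cr: "b \<noteq> c \<Longrightarrow> C \<in> {{#a,b#},{#a,c#},{#a,d#},{#b,c#},{#b,d#},{#c,d#}} \<Longrightarrow>
     C \<noteq> {#a,b#} \<Longrightarrow> C \<noteq> {#a,c#} \<Longrightarrow> mdist {#a,b#} C \<le> 2 \<Longrightarrow> mdist {#a,c#} C \<le> 2 \<Longrightarrow> C = {#a,d#} \<or> C = {#b,c#}"
  apply (elim insertE emptyE)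
  apply (simp_all add: md2 pair_eq)
  apply blast+
  done
lemma comb4:
  assumes Y: "size Y = 4" and sub: "A \<subseteq># Y" "B \<subseteq># Y" "C \<subseteq># Y" "D \<subseteq># Y"
    and sz: "size A = 2" "size B = 2" "size C = 2" "size D = 2"
    and ne: "A \<noteq> B" "A \<noteq> C" "A \<noteq> D" "B \<noteq> C" "B \<noteq> D" "C \<noteq> D"
    and cl: "mdist A B \<le> 2" "mdist A C \<le> 2" "mdist A D \<le> 2" "mdist B C \<le> 2" "mdist B D \<le> 2" "mdist C D \<le> 2"
  shows False
proof -
  obtain x1 y1 where A: "A = {#x1,y1#}" using sz2 sz(1) by blast
  obtain x2 y2 where B0: "B = {#x2,y2#}" using sz2 sz(2) by blast
  obtain a where a: "a \<in># A" "a \<in># B" using cl(1) unfolding A B0 md2 by auto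
  obtain b where Ab: "A = {#a,b#}" using sz2a[OF sz(1) a(1)] by blast
  obtain c where Bc: "B = {#a,c#}" using sz2a[OF sz(2) a(2)] by blast
  have bc: "b \<noteq> c" using ne(1) Ab Bc by auto
  have abc: "{#a,b,c#} \<subseteq># Y"
  proof -
    have "{#a,c#} \<subseteq># Y" "{#a,b#} \<subseteq># Y" using sub(1,2) Ab Bc by simp_all
    then show ?thesis using bc unfolding subseteq_mset_def by (metis count_add_mset)
  qed
  obtain d where Yd: "Y = {#a,b,c,d#}"
  proof -
    have "size (Y - {#a,b,c#}) = 1" using abc Y by (simp add: size_Diff_submset)
    then obtain d where "Y - {#a,b,c#} = {#d#}" using size_1_singleton_mset by blast
    moreover have "Y = {#a,b,c#} + (Y - {#a,b,c#})" using subset_mset.add_diff_inverse[OF abc] by simp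
    ultimately have "Y = {#a,b,c,d#}" by simp
    then show ?thesis using that by blast
  qed
  have C: "C = {#a,d#} \<or> C = {#b,c#}"
    by (rule Cr[OF bc six[OF sz(3) sub(3)[unfolded Yd]]]) (use ne cl Ab Bc in auto)
  have D: "D = {#a,d#} \<or> D = {#b,c#}"
    by (rule Cr[OF bc six[OF sz(4) sub(4)[unfolded Yd]]]) (use ne cl Ab Bc in auto)
  have "C \<noteq> D" "mdist C D \<le> 2" using ne cl by auto
  then show False using C D bc Ab Bc ne by (auto simp: md2 pair_eq)
qed
lemma md12: "mdist {#x#} {#y,t#} \<le> 2 \<Longrightarrow> x = y \<or> x = t"
proof (rule ccontr)
  assume m: "mdist {#x#} {#y,t#} \<le> 2" and n: "\<not> (x = y \<or> x = t)"
  then have "{#x#} - {#y,t#} = {#x#}" "{#y,t#} - {#x#} = {#y,t#}" by auto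
  then show False using m by (simp add: mdist_def)
qed

lemma comb:
  fixes Y :: "'a multiset"
  assumes Y: "size Y \<ge> 3" and z: "z \<notin># Y"
    and sub: "A \<subseteq># Y" "B \<subseteq># Y" "C \<subseteq># Y" "D \<subseteq># Y"
    and sz: "size A \<le> 2" "size B \<le> 2" "size C \<le> 2" "size D \<le> 2"
    and sz': "size Y \<le> size A + 2" "size Y \<le> size B + 2" "size Y \<le> size C + 2" "size Y \<le> size D + 2"
    and ne: "A \<noteq> B" "A \<noteq> C" "A \<noteq> D" "B \<noteq> C" "B \<noteq> D" "C \<noteq> D"
    and cl: "mdist A B \<le> 2" "mdist A C \<le> 2" "mdist A D \<le> 2" "mdist B C \<le> 2" "mdist B D \<le> 2" "mdist C D \<le> 2"
  shows False
proof (cases "size Y = 4")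
  case True
  then show False using comb4[OF True sub _ _ _ _ ne cl] sz sz' by simp
next
  case False
  then have Y3: "size Y = 3" using Y sz sz' by simp
  define f where "f X = (if size X = 1 then add_mset z X else X)" for X
  have s12: "size X = 1 \<or> size X = 2" if "X \<subseteq># Y" "size X \<le> 2" "size Y \<le> size X + 2" for X
    using that Y3 by linarith
  have t1: "X \<subseteq># add_mset z Y" if "X \<subseteq># Y" for X
    using that by (simp add: subset_mset.order_trans)
  have t3: "add_mset z X \<noteq> X'" if "X' \<subseteq># Y" for X X'
    using that z by (metis mset_subset_eqD union_single_eq_member)
  have f1: "f X = add_mset z X" if "size X = 1" for X using that by (simp add: f_def)
  have f2: "f X = X" if "size X = 2" for X using that by (simp add: f_def)
  have fsub: "f X \<subseteq># add_mset z Y" if "X \<subseteq># Y" "size X \<le> 2" "size Y \<le> size X + 2" for X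
    using s12[OF that] f1[of X] f2[of X] t1[OF that(1)] that(1) by auto
  have fsz: "size (f X) = 2" if "X \<subseteq># Y" "size X \<le> 2" "size Y \<le> size X + 2" for X
    using s12[OF that] f1[of X] f2[of X] by auto
  have finj: "f X \<noteq> f X'" if hx: "X \<subseteq># Y" "size X \<le> 2" "size Y \<le> size X + 2"
     "X' \<subseteq># Y" "size X' \<le> 2" "size Y \<le> size X' + 2" "X \<noteq> X'" for X X'
  proof -
    consider "size X = 1" "size X' = 1" | "size X = 2" "size X' = 2" | "size X = 1" "size X' = 2" | "size X = 2" "size X' = 1"
      using s12[OF hx(1-3)] s12[OF hx(4-6)] by blast
    then show ?thesis
    proof cases
      case 1 then show ?thesis using f1 hx(7) by simp
    next
      case 2 then show ?thesis using f2 hx(7) by simp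
    next
      case 3 then show ?thesis using f1[of X] f2[of X'] t3[OF hx(4)] by simp
    next
      case 4 then show ?thesis using f1[of X'] f2[of X] t3[OF hx(1)] by metis
    qed
  qed
  have sym: "mdist P Q = mdist Q P" for P Q :: "'a multiset" by (simp add: mdist_def)
  have mix: "mdist (f P) (f Q) \<le> 2" if h: "size P = 1" "size Q = 2" "mdist P Q \<le> 2" for P Q
  proof -
    obtain x where P: "P = {#x#}" using h(1) size_1_singleton_mset by blast
    obtain y t where Q: "Q = {#y,t#}" using h(2) sz2 by blast
    have "x = y \<or> x = t" using md12[of x y t] h(3) P Q by simp
    moreover have "f P = {#z,x#}" "f Q = {#y,t#}" using f1[OF h(1)] f2[OF h(2)] P Q by simp_all
    ultimately show ?thesis by (simp add: md2)
  qed
  have fcl: "mdist (f X) (f X') \<le> 2" if hx: "X \<subseteq># Y" "size X \<le> 2" "size Y \<le> size X + 2"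
     "X' \<subseteq># Y" "size X' \<le> 2" "size Y \<le> size X' + 2" "mdist X X' \<le> 2" for X X'
  proof -
    consider "size X = 1" "size X' = 1" | "size X = 2" "size X' = 2" | "size X = 1" "size X' = 2" | "size X = 2" "size X' = 1"
      using s12[OF hx(1-3)] s12[OF hx(4-6)] by blast
    then show ?thesis
    proof cases
      case 1 then show ?thesis using f1 hx(7) by (simp add: md_add)
    next
      case 2 then show ?thesis using f2 hx(7) by simp
    next
      case 3 then show ?thesis using hx(7) mix[of X X'] by simp
    next
      case 4 then show ?thesis using hx(7) mix[of X' X] sym[of X X'] sym[of "f X" "f X'"] by simp
    qed
  qed
  have PA: "A \<subseteq># Y" "size A \<le> 2" "size Y \<le> size A + 2" using sub sz sz' by auto
  have PB: "B \<subseteq># Y" "size B \<le> 2" "size Y \<le> size B + 2" using sub sz sz' by auto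
  have PC: "C \<subseteq># Y" "size C \<le> 2" "size Y \<le> size C + 2" using sub sz sz' by auto
  have PD: "D \<subseteq># Y" "size D \<le> 2" "size Y \<le> size D + 2" using sub sz sz' by auto
  have sY: "size (add_mset z Y) = 4" using Y3 by simp
  show False
    by (rule comb4[OF sY fsub[OF PA] fsub[OF PB] fsub[OF PC] fsub[OF PD]
       fsz[OF PA] fsz[OF PB] fsz[OF PC] fsz[OF PD]
       finj[OF PA PB ne(1)] finj[OF PA PC ne(2)] finj[OF PA PD ne(3)]
       finj[OF PB PC ne(4)] finj[OF PB PD ne(5)] finj[OF PC PD ne(6)]
       fcl[OF PA PB cl(1)] fcl[OF PA PC cl(2)] fcl[OF PA PD cl(3)]
       fcl[OF PB PC cl(4)] fcl[OF PB PD cl(5)] fcl[OF PC PD cl(6)]])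
qed


definition ad :: "nat \<Rightarrow> nat \<Rightarrow> nat" where "ad a b = nat \<bar>int a - int b\<bar>"

lemma ad_alt: "ad a b = (a - b) + (b - a)" unfolding ad_def by arith
lemma ad_sym: "ad a b = ad b a" unfolding ad_def by arith

lemma man: "length x = n \<Longrightarrow> manhattan x y = (\<Sum>i<n. ad (x!i) (y!i))"
  by (simp add: manhattan_def ad_def)

lemma man_sym: "length x = length y \<Longrightarrow> manhattan x y = manhattan y x"
  by (simp add: man ad_sym)

definition RM :: "nat \<Rightarrow> (nat \<Rightarrow> nat) \<Rightarrow> nat multiset" where
  "RM n f = (\<Sum>i<n. replicate_mset (f i) i)"

lemma count_RM: "count (RM n f) j = (if j < n then f j else 0)"
  unfolding RM_def by (induction n) auto

lemma size_RM: "size (RM n f) = (\<Sum>i<n. f i)"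
  unfolding RM_def by (induction n) auto

lemma RM_diff: "RM n f - RM n g = RM n (\<lambda>i. f i - g i)"
  by (rule multiset_eqI) (simp add: count_RM)

lemma RM_sub: "(\<And>i. i < n \<Longrightarrow> f i \<le> g i) \<Longrightarrow> RM n f \<subseteq># RM n g"
  unfolding subseteq_mset_def by (simp add: count_RM)

lemma RM_inj: "RM n f = RM n g \<Longrightarrow> i < n \<Longrightarrow> f i = g i"
  by (metis count_RM)

lemma RM_notin: "n \<notin># RM n f"
  by (simp add: count_RM flip: count_eq_zero_iff)

lemma ad_tri: "ad a b \<le> ad a p + ad p b" unfolding ad_def by arith
lemma ad_id: "ad a p + ad p b = ad a b + 2 * ((p - max a b) + (min a b - p))"
  unfolding ad_alt max_def min_def by (cases "a \<le> b"; cases "a \<le> p"; cases "p \<le> b"; simp)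
lemma ad_par: "ad a p + ad p b \<noteq> ad a b \<Longrightarrow> ad a b + 2 \<le> ad a p + ad p b"
  using ad_id[of a p b] by (cases "p - max a b + (min a b - p) = 0") auto


lemma box:
  assumes "length u = n" "length p = n" "length w = n"
    and "manhattan u p \<le> 2" "manhattan p w \<le> 2" "manhattan u w \<ge> 3" and "i < n"
  shows "ad (u!i) (p!i) + ad (p!i) (w!i) = ad (u!i) (w!i)"
proof (rule ccontr)
  assume ne: "\<not> ?thesis"
  define e where "e j = ad (u!j) (p!j) + ad (p!j) (w!j) - ad (u!j) (w!j)" for j
  have ej: "ad (u!j) (p!j) + ad (p!j) (w!j) = ad (u!j) (w!j) + e j" for j
    using ad_tri[of "u!j" "w!j" "p!j"] unfolding e_def by simp
  have "(\<Sum>j<n. ad (u!j) (p!j)) + (\<Sum>j<n. ad (p!j) (w!j)) = (\<Sum>j<n. ad (u!j) (w!j)) + (\<Sum>j<n. e j)"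
    using ej by (simp add: sum.distrib[symmetric])
  then have "manhattan u p + manhattan p w = manhattan u w + (\<Sum>j<n. e j)"
    using assms(1-3) by (simp add: man)
  then have s: "(\<Sum>j<n. e j) \<le> 1" using assms(4-6) by linarith
  have "e i \<ge> 2" using ad_par[OF ne] unfolding e_def by linarith
  moreover have "e i \<le> (\<Sum>j<n. e j)" using assms(7) by (intro member_le_sum) auto
  ultimately show False using s by linarith
qed

lemma between_iff: "ad a p + ad p b = ad a b \<Longrightarrow> min a b \<le> p \<and> p \<le> max a b"
  using ad_id[of a p b] by simp

lemma between_ad:
  assumes "ad a p + ad p b = ad a b" "ad a q + ad q b = ad a b"
  shows "ad p q = ad (ad a p) (ad a q)"
proof -
  have p: "min a b \<le> p" "p \<le> max a b" and q: "min a b \<le> q" "q \<le> max a b"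
    using between_iff[OF assms(1)] between_iff[OF assms(2)] by auto
  show ?thesis
  proof (cases "a \<le> b")
    case True
    then have h: "a \<le> p" "a \<le> q" using p q by auto
    then have "ad a p = p - a" "ad a q = q - a" by (simp_all add: ad_alt)
    then show ?thesis using h by (simp add: ad_def of_nat_diff)
  next
    case False
    then have h: "p \<le> a" "q \<le> a" using p q by auto
    then have "ad a p = a - p" "ad a q = a - q" by (simp_all add: ad_alt)
    then show ?thesis using h by (simp add: ad_def of_nat_diff abs_minus_commute)
  qed
qed

lemma between_inj:
  assumes "ad a p + ad p b = ad a b" "ad a q + ad q b = ad a b" "ad a p = ad a q"
  shows "p = q"
  using between_ad[OF assms(1,2)] assms(3) unfolding ad_alt by simp


lemma geo:
  fixes u w p1 p2 p3 p4 :: "nat list"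
  assumes len: "length u = n" "length w = n" "length p1 = n" "length p2 = n" "length p3 = n" "length p4 = n"
  and dst: "p1 \<noteq> p2" "p1 \<noteq> p3" "p1 \<noteq> p4" "p2 \<noteq> p3" "p2 \<noteq> p4" "p3 \<noteq> p4"
  and cl: "manhattan p1 p2 \<le> 2" "manhattan p1 p3 \<le> 2" "manhattan p1 p4 \<le> 2"
          "manhattan p2 p3 \<le> 2" "manhattan p2 p4 \<le> 2" "manhattan p3 p4 \<le> 2"
  and up: "manhattan u p1 \<le> 2" "manhattan u p2 \<le> 2" "manhattan u p3 \<le> 2" "manhattan u p4 \<le> 2"
  and wp: "manhattan p1 w \<le> 2" "manhattan p2 w \<le> 2" "manhattan p3 w \<le> 2" "manhattan p4 w \<le> 2"
  shows "manhattan u w \<le> 2"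
proof (rule ccontr)
  assume "\<not> ?thesis" then have D: "manhattan u w \<ge> 3" by simp
  define X where "X p = RM n (\<lambda>i. ad (u!i) (p!i))" for p
  define B where "B p \<longleftrightarrow> length p = n \<and> manhattan u p \<le> 2 \<and> manhattan p w \<le> 2" for p
  have bx: "ad (u!i) (p!i) + ad (p!i) (w!i) = ad (u!i) (w!i)" if "B p" "i < n" for p i
    using box[OF len(1) _ len(2) _ _ D that(2)] that(1) unfolding B_def by blast
  have key: "X p \<subseteq># X w \<and> size (X p) \<le> 2 \<and> size (X w) \<le> size (X p) + 2" if "B p" for p
  proof -
    have "X p \<subseteq># X w" unfolding X_def using bx[OF that] by (intro RM_sub) (metis le_add1)
    moreover have "size (X p) = manhattan u p" unfolding X_def size_RM using len(1) by (simp add: man)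
    moreover have "size (X w) = manhattan u p + manhattan p w"
    proof -
      have "size (X w) = (\<Sum>i<n. ad (u!i) (p!i) + ad (p!i) (w!i))"
        unfolding X_def size_RM using bx[OF that] by simp
      also have "\<dots> = manhattan u p + manhattan p w"
        using len(1) that unfolding B_def by (simp add: man sum.distrib)
      finally show ?thesis .
    qed
    ultimately show ?thesis using that unfolding B_def by simp
  qed
  have md: "mdist (X p) (X q) = manhattan p q" if "B p" "B q" for p q
  proof -
    have "mdist (X p) (X q) = (\<Sum>i<n. ad (ad (u!i) (p!i)) (ad (u!i) (q!i)))"
      unfolding mdist_def X_def RM_diff size_RM ad_alt by (simp add: sum.distrib)
    also have "\<dots> = (\<Sum>i<n. ad (p!i) (q!i))"
      using between_ad[OF bx[OF that(1)] bx[OF that(2)]] by simp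
    also have "\<dots> = manhattan p q" using that(1) unfolding B_def by (simp add: man)
    finally show ?thesis .
  qed
  have inj: "X p \<noteq> X q" if "B p" "B q" "p \<noteq> q" for p q
  proof
    assume e: "X p = X q"
    have "p ! i = q ! i" if "i < n" for i
      using between_inj[OF bx[OF \<open>B p\<close> that] bx[OF \<open>B q\<close> that]] RM_inj[OF e[unfolded X_def] that] by simp
    then have "p = q" using \<open>B p\<close> \<open>B q\<close> unfolding B_def by (simp add: nth_equalityI)
    then show False using \<open>p \<noteq> q\<close> by simp
  qed
  have B: "B p1" "B p2" "B p3" "B p4" using len up wp unfolding B_def by auto
  have sY: "size (X w) \<ge> 3" unfolding X_def size_RM using D len(1) by (simp add: man)
  have z: "n \<notin># X w" unfolding X_def by (rule RM_notin)
  show False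
    using comb[OF sY z, of "X p1" "X p2" "X p3" "X p4"] key[OF B(1)] key[OF B(2)] key[OF B(3)] key[OF B(4)]
      inj[OF B(1) B(2) dst(1)] inj[OF B(1) B(3) dst(2)] inj[OF B(1) B(4) dst(3)]
      inj[OF B(2) B(3) dst(4)] inj[OF B(2) B(4) dst(5)] inj[OF B(3) B(4) dst(6)]
      md[OF B(1) B(2)] md[OF B(1) B(3)] md[OF B(1) B(4)] md[OF B(2) B(3)] md[OF B(2) B(4)] md[OF B(3) B(4)]
      cl by simp
qed



lemma match_step_sub: "match_step T v \<subseteq> T"
  unfolding match_step_def by blast

definition Tk :: "'a set set \<Rightarrow> 'a list \<Rightarrow> nat \<Rightarrow> 'a set set" where
  "Tk K vs k = foldl match_step K (take k vs)"

lemma Tk_Suc: "k < length vs \<Longrightarrow> Tk K vs (Suc k) = match_step (Tk K vs k) (vs ! k)"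
  unfolding Tk_def by (simp add: take_Suc_conv_app_nth)

lemma Tk_mono_Suc: "Tk K vs (Suc k) \<subseteq> Tk K vs k"
proof (cases "k < length vs")
  case True then show ?thesis using Tk_Suc match_step_sub by metis
next
  case False then show ?thesis unfolding Tk_def by simp
qed

lemma Tk_mono: "k \<le> k' \<Longrightarrow> Tk K vs k' \<subseteq> Tk K vs k"
  by (induction k' rule: dec_induct) (use Tk_mono_Suc in blast)+

lemma Tk_sub: "Tk K vs k \<subseteq> K"
  using Tk_mono[of 0 k K vs] by (simp add: Tk_def)

lemma survive:
  assumes "\<rho> \<in> K" "k \<le> length vs" "\<And>j. j < k \<Longrightarrow> vs ! j \<notin> \<rho> \<and> insert (vs ! j) \<rho> \<notin> K"
  shows "\<rho> \<in> Tk K vs k"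
  using assms(2,3)
proof (induction k)
  case 0 then show ?case using assms(1) by (simp add: Tk_def)
next
  case (Suc k)
  then have IH: "\<rho> \<in> Tk K vs k" by simp
  have h: "vs ! k \<notin> \<rho>" "insert (vs ! k) \<rho> \<notin> K" using Suc.prems by auto
  then have "insert (vs ! k) \<rho> \<notin> Tk K vs k" using Tk_sub by blast
  then show ?case using IH h Suc.prems(1) unfolding Tk_Suc[of k vs K, OF Suc_le_lessD[OF Suc.prems(1)]]
    match_step_def match_S_def by auto
qed

lemma kill:
  assumes "k < length vs" "\<rho> \<in> Tk K vs k" "vs ! k \<notin> \<rho>" "insert (vs ! k) \<rho> \<in> Tk K vs k"
  shows "\<rho> \<notin> Tk K vs (Suc k)" "insert (vs ! k) \<rho> \<notin> Tk K vs (Suc k)"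
  using assms unfolding Tk_Suc[OF assms(1)] match_step_def match_S_def by auto

lemma crit_gen:
  assumes down: "\<And>\<tau> \<rho>. \<tau> \<in> K \<Longrightarrow> \<rho> \<subseteq> \<tau> \<Longrightarrow> \<rho> \<in> K"
    and sK: "\<sigma> \<in> K" and sV: "\<sigma> \<subseteq> set vs" and ne: "\<sigma> \<noteq> {}" and dv: "distinct vs"
    and ext: "\<And>u w. u \<in> set vs \<Longrightarrow> u \<notin> \<sigma> \<Longrightarrow> w \<in> \<sigma> \<Longrightarrow> insert u (\<sigma> - {w}) \<in> K \<Longrightarrow> insert u \<sigma> \<in> K"
  shows "\<sigma> \<notin> foldl match_step K vs"
proof -
  have fin: "foldl match_step K vs = Tk K vs (length vs)" by (simp add: Tk_def)
  define P where "P i \<longleftrightarrow> i < length vs \<and> insert (vs ! i) \<sigma> \<in> K" for i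
  obtain x where "x \<in> \<sigma>" using ne by blast
  then obtain k where "k < length vs" "vs ! k = x" using sV by (metis in_set_conv_nth subsetD)
  then have "P k" using sK \<open>x \<in> \<sigma>\<close> unfolding P_def by (simp add: insert_absorb)
  define i where "i = (LEAST i. P i)"
  have Pi: "P i" unfolding i_def using \<open>P k\<close> by (rule LeastI)
  have il: "i < length vs" "insert (vs ! i) \<sigma> \<in> K" using Pi unfolding P_def by auto
  have before: "insert (vs ! j) \<sigma> \<notin> K" "vs ! j \<notin> \<sigma>" if "j < i" for j
  proof -
    have "\<not> P j" using that not_less_Least unfolding i_def by blast
    then show "insert (vs ! j) \<sigma> \<notin> K" using that il(1) unfolding P_def by auto
    then show "vs ! j \<notin> \<sigma>" using sK by (auto simp: insert_absorb)
  qed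
  have sT: "\<sigma> \<in> Tk K vs i" using survive[OF sK] il(1) before by simp
  have "\<sigma> \<notin> Tk K vs (Suc i)"
  proof (cases "vs ! i \<in> \<sigma>")
    case False
    have "insert (vs ! i) \<sigma> \<in> Tk K vs i"
    proof (rule survive[OF il(2)])
      show "i \<le> length vs" using il(1) by simp
      fix j assume j: "j < i"
      have "vs ! j \<noteq> vs ! i" using dv j il(1) by (simp add: nth_eq_iff_index_eq)
      moreover have "insert (vs ! j) (insert (vs ! i) \<sigma>) \<notin> K"
        using before(1)[OF j] down by blast
      ultimately show "vs ! j \<notin> insert (vs ! i) \<sigma> \<and> insert (vs ! j) (insert (vs ! i) \<sigma>) \<notin> K"
        using before(2)[OF j] by simp
    qed
    then show ?thesis using kill(1)[OF il(1) sT False] by blast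
  next
    case True
    define \<tau> where "\<tau> = \<sigma> - {vs ! i}"
    have st: "insert (vs ! i) \<tau> = \<sigma>" using True unfolding \<tau>_def by blast
    have tK: "\<tau> \<in> K" using down[OF sK] unfolding \<tau>_def by blast
    have "\<tau> \<in> Tk K vs i"
    proof (rule survive[OF tK])
      show "i \<le> length vs" using il(1) by simp
      fix j assume j: "j < i"
      have "vs ! j \<in> set vs" using j il(1) by simp
      then have "insert (vs ! j) \<tau> \<notin> K"
        using ext[of "vs ! j" "vs ! i"] before[OF j] True unfolding \<tau>_def by blast
      then show "vs ! j \<notin> \<tau> \<and> insert (vs ! j) \<tau> \<notin> K" using before(2)[OF j] unfolding \<tau>_def by blast
    qed
    moreover have "vs ! i \<notin> \<tau>" unfolding \<tau>_def by simp
    ultimately show ?thesis using kill(2)[OF il(1)] sT st by metis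
  qed
  then show ?thesis using fin Tk_mono[of "Suc i" "length vs" K vs] il(1) by auto
qed


lemma pick: assumes "Suc k \<le> card S" shows "\<exists>a\<in>S. k \<le> card (S - {a})"
proof -
  have "finite S" "S \<noteq> {}" using assms card.infinite by fastforce+
  then obtain a where "a \<in> S" by blast
  then have "card (S - {a}) = card S - 1" using \<open>finite S\<close> by simp
  then show ?thesis using \<open>a \<in> S\<close> assms by auto
qed
lemma four: assumes "4 \<le> card S"
  shows "\<exists>a b c d. a \<in> S \<and> b \<in> S \<and> c \<in> S \<and> d \<in> S \<and> a \<noteq> b \<and> a \<noteq> c \<and> a \<noteq> d \<and> b \<noteq> c \<and> b \<noteq> d \<and> c \<noteq> d"
proof -
  obtain a where a: "a \<in> S" "3 \<le> card (S - {a})" using pick[of 3 S] assms by auto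
  obtain b where b: "b \<in> S - {a}" "2 \<le> card (S - {a} - {b})" using pick[of 2 "S - {a}"] a by auto
  obtain c where c: "c \<in> S - {a} - {b}" "1 \<le> card (S - {a} - {b} - {c})" using pick[of 1 "S - {a} - {b}"] b by auto
  obtain d where d: "d \<in> S - {a} - {b} - {c}" using pick[of 0 "S - {a} - {b} - {c}"] c by auto
  show ?thesis using a b c d by blast
qed

lemma man_self: "manhattan x x = 0"
  by (simp add: manhattan_def)

lemma vr_down: "\<tau> \<in> vr_complex X r \<Longrightarrow> \<rho> \<subseteq> \<tau> \<Longrightarrow> \<rho> \<in> vr_complex X r"
  unfolding vr_complex_def by (auto intro: finite_subset)

lemma ext_geo:
  assumes sK: "\<sigma> \<in> vr_complex (grid m n) 2" and c5: "5 \<le> card \<sigma>"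
    and u: "u \<in> grid m n" "u \<notin> \<sigma>" and w: "w \<in> \<sigma>"
    and tK: "insert u (\<sigma> - {w}) \<in> vr_complex (grid m n) 2"
  shows "insert u \<sigma> \<in> vr_complex (grid m n) 2"
proof -
  have fin: "finite \<sigma>" using sK unfolding vr_complex_def by simp
  have "card (\<sigma> - {w}) = card \<sigma> - 1" using fin w by simp
  then have "4 \<le> card (\<sigma> - {w})" using c5 by simp
  then obtain p1 p2 p3 p4 where P: "p1 \<in> \<sigma> - {w}" "p2 \<in> \<sigma> - {w}" "p3 \<in> \<sigma> - {w}" "p4 \<in> \<sigma> - {w}"
    and dst: "p1 \<noteq> p2" "p1 \<noteq> p3" "p1 \<noteq> p4" "p2 \<noteq> p3" "p2 \<noteq> p4" "p3 \<noteq> p4"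
    using four by blast
  have sg: "\<sigma> \<subseteq> grid m n" and sd: "\<forall>x\<in>\<sigma>. \<forall>y\<in>\<sigma>. manhattan x y \<le> 2" using sK unfolding vr_complex_def by auto
  have td: "\<forall>x\<in>insert u (\<sigma> - {w}). \<forall>y\<in>insert u (\<sigma> - {w}). manhattan x y \<le> 2"
    using tK unfolding vr_complex_def by blast
  have lenq: "length q = n" if "q \<in> grid m n" for q using that unfolding grid_def by simp
  have lw: "length w = n" using w sg lenq by blast
  have lu: "length u = n" using u lenq by blast
  have lp: "length p1 = n" "length p2 = n" "length p3 = n" "length p4 = n" using P sg lenq by blast+
  have uw: "manhattan u w \<le> 2"
    by (rule geo[OF lu lw lp dst]) (use P sd td w in auto)
  have wu: "manhattan w u \<le> 2" using uw man_sym[of w u] lu lw by simp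
  show ?thesis
    unfolding vr_complex_def
  proof (intro CollectI conjI)
    show "insert u \<sigma> \<subseteq> grid m n" using sg u by simp
    show "finite (insert u \<sigma>)" using fin by simp
    show "\<forall>x\<in>insert u \<sigma>. \<forall>y\<in>insert u \<sigma>. manhattan x y \<le> 2"
    proof (intro ballI)
      fix x y assume x: "x \<in> insert u \<sigma>" and y: "y \<in> insert u \<sigma>"
      show "manhattan x y \<le> 2"
      proof (cases "x = u")
        case True
        then show ?thesis using y uw td man_self[of u] by (cases "y = w") auto
      next
        case False
        then have "x \<in> \<sigma>" using x by simp
        then show ?thesis using y wu td sd by (cases "x = w") auto
      qed
    qed
  qed
qed

theorem lemma4p10:
  fixes m n :: nat and vs :: "nat list list"
  assumes "n \<ge> 3" and "m \<ge> 1"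
    and "set vs = grid m n" and "distinct vs" and "sorted_wrt antilex_less vs"
  shows "\<forall>\<sigma> \<in> critical_cells (vr_complex (grid m n) 2) vs. simplex_dim \<sigma> < 4"
proof
  fix \<sigma> assume cr: "\<sigma> \<in> critical_cells (vr_complex (grid m n) 2) vs"
  let ?K = "vr_complex (grid m n) 2"
  have sK: "\<sigma> \<in> ?K" using cr Tk_sub[of ?K vs "length vs"] unfolding critical_cells_def Tk_def by auto
  show "simplex_dim \<sigma> < 4"
  proof (rule ccontr)
    assume "\<not> simplex_dim \<sigma> < 4"
    then have c5: "5 \<le> card \<sigma>" unfolding simplex_dim_def by simp
    have "\<sigma> \<notin> foldl match_step ?K vs"
    proof (rule crit_gen[OF _ sK])
      show "\<rho> \<in> ?K" if "\<tau> \<in> ?K" "\<rho> \<subseteq> \<tau>" for \<tau> \<rho> using vr_down that by blast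
      show "\<sigma> \<subseteq> set vs" using sK assms(3) unfolding vr_complex_def by auto
      show "\<sigma> \<noteq> {}" using c5 by auto
      show "distinct vs" by (rule assms(4))
      show "insert u \<sigma> \<in> ?K" if "u \<in> set vs" "u \<notin> \<sigma>" "w \<in> \<sigma>" "insert u (\<sigma> - {w}) \<in> ?K" for u w
        using ext_geo[OF sK c5 _ that(2,3,4)] that(1) assms(3) by simp
    qed
    then show False using cr unfolding critical_cells_def by simp
  qed
qed

end
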